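(* Let $n \ge 3$. Then \[\det'(Q_n) = \begin{cases} \lceil \log_2 n \rceil + 1, & \text{if } n - \lceil \log_2 n \rceil > 2^{\lceil \log_2 n \rceil - 1},\\ \lceil \log_2 n \rceil, & \text{otherwise.}\end{cases}\]
   Context: $Q_n$ is the $n$-dimensional hypercube: its vertices are the binary strings of length $n$, two being adjacent iff they differ in exactly one bit. For a graph $G$ with at most one isolated vertex and no component isomorphic to $K_2$, an edge subset $T$ is an edge determining set if the only automorphism $\phi$ of $G$ satisfying $\{\phi(u),\phi(v)\}=\{u,v\}$ for all $\{u,v\}\in T$ is the identity; the determining index $\det'(G)$ is the minimum size of an edge determining set. *)

theory Defs
  imports Complex_Main
begin

text \<open>A simple graph is given by a vertex set V and a symmetric irreflexive
  adjacency relation adj; edges are two-element sets {u,v} with adj u v.\<close>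

definition edges :: "'a set \<Rightarrow> ('a \<Rightarrow> 'a \<Rightarrow> bool) \<Rightarrow> 'a set set" where
  "edges V adj = {{u, v} | u v. u \<in> V \<and> v \<in> V \<and> adj u v}"

definition graph_aut :: "'a set \<Rightarrow> ('a \<Rightarrow> 'a \<Rightarrow> bool) \<Rightarrow> ('a \<Rightarrow> 'a) \<Rightarrow> bool" where
  "graph_aut V adj \<phi> \<longleftrightarrow> bij_betw \<phi> V V \<and>
     (\<forall>u\<in>V. \<forall>v\<in>V. adj (\<phi> u) (\<phi> v) \<longleftrightarrow> adj u v)"

definition edge_determining_set :: "'a set \<Rightarrow> ('a \<Rightarrow> 'a \<Rightarrow> bool) \<Rightarrow> 'a set set \<Rightarrow> bool" where
  "edge_determining_set V adj T \<longleftrightarrow> T \<subseteq> edges V adj \<and>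
     (\<forall>\<phi>. graph_aut V adj \<phi> \<and> (\<forall>e\<in>T. \<phi> ` e = e) \<longrightarrow> (\<forall>v\<in>V. \<phi> v = v))"

definition determining_index :: "'a set \<Rightarrow> ('a \<Rightarrow> 'a \<Rightarrow> bool) \<Rightarrow> nat" where
  "determining_index V adj = (LEAST k. \<exists>T. edge_determining_set V adj T \<and> finite T \<and> card T = k)"

definition hypercube_vertices :: "nat \<Rightarrow> bool list set" where
  "hypercube_vertices n = {xs. length xs = n}"

definition hypercube_adj :: "bool list \<Rightarrow> bool list \<Rightarrow> bool" where
  "hypercube_adj xs ys \<longleftrightarrow> length xs = length ys \<and>
     card {i. i < length xs \<and> xs ! i \<noteq> ys ! i} = 1"

end

theory Submission
  imports Defs
begin


lemma log_bounds:
  fixes n :: nat assumes "n \<ge> 3"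
  defines "K \<equiv> nat \<lceil>log 2 (real n)\<rceil>"
  shows "2^(K-1) < n" "n \<le> 2^K" "K \<ge> 2"
proof -
  have lp: "log 2 (real n) > 1" using assms(1) by simp
  hence Kr: "real K = real_of_int \<lceil>log 2 (real n)\<rceil>" unfolding K_def by simp
  show "n \<le> 2^K"
  proof (rule ccontr)
    assume "\<not> n \<le> 2^K" hence "2^K < n" by simp
    hence "K < log 2 n" using less_log2_of_power by blast
    thus False using Kr by linarith
  qed
  show "K \<ge> 2"
  proof (rule ccontr)
    assume "\<not> K \<ge> 2" hence "real K \<le> 1" by simp
    thus False using Kr lp by linarith
  qed
  show "2^(K-1) < n"
  proof (rule ccontr)
    assume "\<not> 2^(K-1) < n" hence "n \<le> 2^(K-1)" by simp
    hence "log 2 n \<le> real (K-1)" using log2_of_power_le assms by fastforce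
    moreover have "real (K-1) = real K - 1" using \<open>K \<ge> 2\<close> by simp
    ultimately show False using Kr by linarith
  qed
qed

lemma pow_suc: "Suc m \<le> (2::nat)^m"
proof (induction m)
  case (Suc m)
  have "1 \<le> (2::nat)^m" by simp
  thus ?case using Suc by simp
qed simp

lemma pow_ge3: "1 \<le> m \<Longrightarrow> m \<le> (2::nat)^(m-1)"
  using pow_suc[of "m-1"] by simp

lemma pow_ge2: "m + 2^(m-1) \<le> (2::nat)^m"
proof (cases m)
  case (Suc k) thus ?thesis using pow_suc[of k] by simp
qed simp

lemma arith_main:
  fixes n :: nat assumes "n \<ge> 3"
  defines "K \<equiv> nat \<lceil>log 2 (real n)\<rceil>"
  defines "R \<equiv> (if n - K > 2 ^ (K - 1) then K + 1 else K)"
  shows "n - R \<le> 2^(R-1)" "\<And>m. n - m \<le> 2^(m-1) \<Longrightarrow> R \<le> m" "2 \<le> R" "R \<le> n"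
proof -
  note lb = log_bounds[OF assms(1), folded K_def]
  show "2 \<le> R" using lb unfolding R_def by auto
  show "n - R \<le> 2^(R-1)" using lb unfolding R_def by auto
  have "K \<le> 2^(K-1)" using pow_ge3[of K] lb(3) by simp
  then show "R \<le> n" using lb unfolding R_def by auto
  fix m assume m: "n - m \<le> 2^(m-1)"
  show "R \<le> m"
  proof (rule ccontr)
    assume "\<not> R \<le> m" hence mR: "m < R" by simp
    show False
    proof (cases "n - K > 2 ^ (K - 1)")
      case True
      hence "m \<le> K" using mR unfolding R_def by simp
      hence "2^(m-1) \<le> (2::nat)^(K-1)" by (intro power_increasing) auto
      thus False using True m \<open>m \<le> K\<close> by linarith
    next
      case False
      hence "m \<le> K - 1" using mR unfolding R_def by simp
      hence "2^m \<le> (2::nat)^(K-1)" by (intro power_increasing) auto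
      thus False using pow_ge2[of m] m lb by linarith
    qed
  qed
qed


definition D :: "bool list \<Rightarrow> bool list \<Rightarrow> nat set" where
  "D x y = {i. i < length x \<and> x!i \<noteq> y!i}"
definition hdist :: "bool list \<Rightarrow> bool list \<Rightarrow> nat" where
  "hdist x y = card (D x y)"

lemma D_fin[simp]: "finite (D x y)"
  unfolding D_def by (rule finite_subset[of _ "{..<length x}"]) auto

lemma D_sym: "length x = length y \<Longrightarrow> D x y = D y x"
  unfolding D_def by auto

lemma hdist_sym: "length x = length y \<Longrightarrow> hdist x y = hdist y x"
  unfolding hdist_def using D_sym by metis

lemma D_self[simp]: "D x x = {}" unfolding D_def by auto

lemma hdist_tri: "length x = length z \<Longrightarrow> hdist x y \<le> hdist x z + hdist z y"
proof -
  assume l: "length x = length z"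
  have "D x y \<subseteq> D x z \<union> D z y" unfolding D_def using l by auto
  hence "card (D x y) \<le> card (D x z \<union> D z y)" by (intro card_mono) auto
  also have "\<dots> \<le> card (D x z) + card (D z y)" by (rule card_Un_le)
  finally show ?thesis unfolding hdist_def .
qed

lemma D_flip: "length x = length w \<Longrightarrow> j < length w \<Longrightarrow>
  D x (w[j := \<not> w!j]) = (if x!j = w!j then insert j (D x w) else D x w - {j})"
  unfolding D_def by (auto simp: nth_list_update)

lemma hdist_flip: "length x = length w \<Longrightarrow> j < length w \<Longrightarrow>
  hdist x (w[j := \<not> w!j]) = (if x!j = w!j then hdist x w + 1 else hdist x w - 1)"
proof -
  assume a: "length x = length w" "j < length w"
  show ?thesis
  proof (cases "x!j = w!j")
    case True
    hence "j \<notin> D x w" unfolding D_def by auto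
    thus ?thesis using True D_flip[OF a] unfolding hdist_def by simp
  next
    case False
    hence "j \<in> D x w" unfolding D_def using a by auto
    thus ?thesis using False D_flip[OF a] unfolding hdist_def by simp
  qed
qed

lemma adj_hdist: "hypercube_adj x y \<longleftrightarrow> length x = length y \<and> hdist x y = 1"
  unfolding hypercube_adj_def hdist_def D_def by simp

lemma hdist0: "length x = length y \<Longrightarrow> hdist x y = 0 \<Longrightarrow> x = y"
  unfolding hdist_def D_def by (auto intro: nth_equalityI)

fun W :: "nat \<Rightarrow> nat \<Rightarrow> bool list \<Rightarrow> bool list \<Rightarrow> bool" where
  "W n 0 x y = (x = y)"
| "W n (Suc k) x y = (W n k x y \<or> (\<exists>z. length z = n \<and> W n k x z \<and> hypercube_adj z y))"

lemma W_le: "length x = n \<Longrightarrow> length y = n \<Longrightarrow> W n k x y \<Longrightarrow> hdist x y \<le> k"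
proof (induction k arbitrary: y)
  case 0 thus ?case by (simp add: hdist_def)
next
  case (Suc k)
  show ?case
  proof (cases "W n k x y")
    case True
    have "hdist x y \<le> k" using Suc.IH Suc.prems True by blast
    thus ?thesis by simp
  next
    case False
    then obtain z where z: "length z = n" "W n k x z" "hypercube_adj z y" using Suc by auto
    have "hdist x y \<le> hdist x z + hdist z y" using hdist_tri z Suc by simp
    thus ?thesis using Suc.IH[of z] z Suc.prems by (simp add: adj_hdist)
  qed
qed

lemma le_W: "length x = n \<Longrightarrow> length y = n \<Longrightarrow> hdist x y \<le> k \<Longrightarrow> W n k x y"
proof (induction k arbitrary: y)
  case 0 thus ?case using hdist0 by simp
next
  case (Suc k)
  show ?case
  proof (cases "hdist x y \<le> k")
    case True thus ?thesis using Suc by simp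
  next
    case False
    hence hk: "hdist x y = Suc k" using Suc by simp
    hence "D x y \<noteq> {}" unfolding hdist_def by auto
    then obtain i where i: "i \<in> D x y" by auto
    hence il: "i < n" and xi: "x!i \<noteq> y!i" unfolding D_def using Suc by auto
    define z where "z = y[i := \<not> y!i]"
    have lz: "length z = n" using Suc unfolding z_def by simp
    have "hdist x z = hdist x y - 1" unfolding z_def using hdist_flip[of x y i] Suc il xi by simp
    hence "W n k x z" using Suc.IH[OF Suc.prems(1) lz] hk by simp
    moreover have "hdist y z = 1" unfolding z_def using hdist_flip[of y y i] Suc il
      by (simp add: hdist_def)
    hence "hypercube_adj z y" using lz Suc by (simp add: adj_hdist hdist_sym)
    ultimately show ?thesis using lz by auto
  qed
qed

lemma aut_V: "graph_aut (hypercube_vertices n) hypercube_adj \<phi> \<Longrightarrow> length x = n \<Longrightarrow> length (\<phi> x) = n"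
  unfolding graph_aut_def hypercube_vertices_def bij_betw_def by auto

lemma W_aut: "graph_aut (hypercube_vertices n) hypercube_adj \<phi> \<Longrightarrow> length x = n \<Longrightarrow> length y = n
   \<Longrightarrow> W n k x y \<Longrightarrow> W n k (\<phi> x) (\<phi> y)"
proof (induction k arbitrary: y)
  case 0 thus ?case by simp
next
  case (Suc k)
  show ?case
  proof (cases "W n k x y")
    case True thus ?thesis using Suc by simp
  next
    case False
    then obtain z where z: "length z = n" "W n k x z" "hypercube_adj z y" using Suc by auto
    have "hypercube_adj (\<phi> z) (\<phi> y)" using Suc.prems z
      unfolding graph_aut_def hypercube_vertices_def by auto
    thus ?thesis using Suc.IH[of z] z Suc.prems aut_V by auto
  qed
qed

lemma aut_inv: assumes "graph_aut V adj \<phi>" shows "graph_aut V adj (inv_into V \<phi>)"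
proof -
  have b: "bij_betw (inv_into V \<phi>) V V" using assms bij_betw_inv_into unfolding graph_aut_def by blast
  have "\<forall>u\<in>V. \<forall>v\<in>V. adj (inv_into V \<phi> u) (inv_into V \<phi> v) \<longleftrightarrow> adj u v"
  proof (intro ballI)
    fix u v assume uv: "u \<in> V" "v \<in> V"
    have "inv_into V \<phi> u \<in> V" "inv_into V \<phi> v \<in> V" using b uv bij_betwE by blast+
    moreover have "\<phi> (inv_into V \<phi> u) = u" "\<phi> (inv_into V \<phi> v) = v"
      using assms uv unfolding graph_aut_def by (auto simp: bij_betw_def f_inv_into_f)
    ultimately show "adj (inv_into V \<phi> u) (inv_into V \<phi> v) \<longleftrightarrow> adj u v"
      using assms unfolding graph_aut_def by metis
  qed
  thus ?thesis using b unfolding graph_aut_def by blast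
qed

lemma hdist_aut_le: "graph_aut (hypercube_vertices n) hypercube_adj \<phi> \<Longrightarrow> length x = n \<Longrightarrow> length y = n
   \<Longrightarrow> hdist (\<phi> x) (\<phi> y) \<le> hdist x y"
proof -
  assume a: "graph_aut (hypercube_vertices n) hypercube_adj \<phi>" "length x = n" "length y = n"
  have "W n (hdist x y) x y" using le_W[OF a(2) a(3)] by simp
  hence "W n (hdist x y) (\<phi> x) (\<phi> y)" using W_aut[OF a] by simp
  thus ?thesis using W_le aut_V[OF a(1) a(2)] aut_V[OF a(1) a(3)] by blast
qed

lemma hdist_aut: assumes "graph_aut (hypercube_vertices n) hypercube_adj \<phi>" "length x = n" "length y = n"
  shows "hdist (\<phi> x) (\<phi> y) = hdist x y"
proof -
  let ?V = "hypercube_vertices n"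
  let ?\<psi> = "inv_into ?V \<phi>"
  have "?\<psi> (\<phi> x) = x" "?\<psi> (\<phi> y) = y" using assms unfolding graph_aut_def bij_betw_def hypercube_vertices_def
    by (auto intro: inv_into_f_f)
  moreover have "hdist (?\<psi> (\<phi> x)) (?\<psi> (\<phi> y)) \<le> hdist (\<phi> x) (\<phi> y)"
    using hdist_aut_le[OF aut_inv[OF assms(1)]] aut_V assms by blast
  ultimately show ?thesis using hdist_aut_le assms by (metis le_antisym)
qed



lemma aut_structure:
  assumes aut: "graph_aut (hypercube_vertices n) hypercube_adj \<phi>"
  shows "\<exists>\<pi> a. \<pi> ` {..<n} = {..<n} \<and> inj_on \<pi> {..<n} \<and> length a = n \<and>
     (\<forall>x. length x = n \<longrightarrow> (\<forall>i<n. \<phi> x ! \<pi> i = (x!i \<noteq> a ! \<pi> i)))"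
proof -
  define z0 where "z0 = replicate n False"
  define a where "a = \<phi> z0"
  define u where "u i = z0[i := True]" for i
  have lz0: "length z0 = n" unfolding z0_def by simp
  have la: "length a = n" unfolding a_def using aut_V[OF aut lz0] .
  have lu: "length (u i) = n" for i unfolding u_def using lz0 by simp
  have uf: "i < n \<Longrightarrow> u i = z0[i := \<not> z0!i]" for i unfolding u_def z0_def by simp
  have h1: "hdist a (\<phi> (u i)) = 1" if "i < n" for i
  proof -
    have "hdist z0 (u i) = 1" using hdist_flip[of z0 z0 i] that lz0 uf[OF that] by (simp add: hdist_def)
    thus ?thesis unfolding a_def using hdist_aut[OF aut lz0 lu] by simp
  qed
  define \<pi> where "\<pi> i = (SOME j. D a (\<phi> (u i)) = {j})" for i
  have piD: "D a (\<phi> (u i)) = {\<pi> i}" if "i < n" for i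
  proof -
    have "card (D a (\<phi> (u i))) = 1" using h1[OF that] unfolding hdist_def .
    then obtain j where "D a (\<phi> (u i)) = {j}" by (rule card_1_singletonE)
    thus ?thesis unfolding \<pi>_def by (rule someI)
  qed
  have pin: "\<pi> i < n" if "i < n" for i using piD[OF that] la unfolding D_def by auto
  have phiu: "\<phi> (u i) = a[\<pi> i := \<not> a ! \<pi> i]" if "i < n" for i
  proof (rule nth_equalityI)
    show "length (\<phi> (u i)) = length (a[\<pi> i := \<not> a ! \<pi> i])" using aut_V[OF aut lu] la by simp
    fix k assume "k < length (\<phi> (u i))"
    hence k: "k < n" using aut_V[OF aut lu] by simp
    have "k \<in> D a (\<phi> (u i)) \<longleftrightarrow> k = \<pi> i" using piD[OF that] by auto
    thus "\<phi> (u i) ! k = a[\<pi> i := \<not> a ! \<pi> i] ! k" using k la unfolding D_def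
      by (cases "k = \<pi> i") auto
  qed
  have key: "\<phi> x ! \<pi> i = (x!i \<noteq> a ! \<pi> i)" if x: "length x = n" and i: "i < n" for x i
  proof -
    have lx: "length (\<phi> x) = n" using aut_V[OF aut x] .
    have e1: "hdist (\<phi> x) (\<phi> (u i)) = hdist x (u i)" using hdist_aut[OF aut x lu] .
    have e2: "hdist (\<phi> x) a = hdist x z0" unfolding a_def using hdist_aut[OF aut x lz0] .
    have e3: "hdist x (u i) = (if x!i = z0!i then hdist x z0 + 1 else hdist x z0 - 1)"
      using hdist_flip[of x z0 i] uf[OF i] x lz0 i by simp
    have e4: "hdist (\<phi> x) (\<phi> (u i)) = (if \<phi> x ! \<pi> i = a ! \<pi> i then hdist (\<phi> x) a + 1 else hdist (\<phi> x) a - 1)"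
      using hdist_flip[of "\<phi> x" a "\<pi> i"] phiu[OF i] lx la pin[OF i] by simp
    have z0i: "z0 ! i = False" unfolding z0_def using i by simp
    show ?thesis using e1 e2 e3 e4 z0i by (cases "x!i"; cases "\<phi> x ! \<pi> i = a ! \<pi> i"; simp; linarith)
  qed
  have inj: "inj_on \<pi> {..<n}"
  proof (rule inj_onI)
    fix i j assume ij: "i \<in> {..<n}" "j \<in> {..<n}" "\<pi> i = \<pi> j"
    hence "\<phi> (u i) = \<phi> (u j)" using phiu by simp
    moreover have "inj_on \<phi> (hypercube_vertices n)" using aut unfolding graph_aut_def bij_betw_def by simp
    ultimately have "u i = u j" using lu unfolding hypercube_vertices_def inj_on_def by auto
    hence "u i ! i = u j ! i" by simp
    thus "i = j" using ij unfolding u_def z0_def by (cases "i = j") auto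
  qed
  have "\<pi> ` {..<n} = {..<n}" using inj pin by (intro endo_inj_surj) auto
  thus ?thesis using inj la key by blast
qed



lemma bits_inj: "A < 2^m \<Longrightarrow> B < 2^m \<Longrightarrow> (\<forall>s<m. odd (A div 2^s) \<longleftrightarrow> odd (B div 2^s)) \<Longrightarrow> A = (B::nat)"
proof (induction m arbitrary: A B)
  case 0 thus ?case by simp
next
  case (Suc m)
  have "A div 2 = B div 2"
  proof (rule Suc.IH)
    show "A div 2 < 2^m" "B div 2 < 2^m" using Suc.prems by auto
    show "\<forall>s<m. odd (A div 2 div 2 ^ s) = odd (B div 2 div 2 ^ s)"
    proof (intro allI impI)
      fix s assume "s < m"
      hence "odd (A div 2^(Suc s)) = odd (B div 2^(Suc s))" using Suc.prems(3) \<open>s < m\<close> Suc_mono by blast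
      thus "odd (A div 2 div 2 ^ s) = odd (B div 2 div 2 ^ s)" by (simp add: div_mult2_eq)
    qed
  qed
  moreover have "A mod 2 = B mod 2" using Suc.prems(3)[rule_format, of 0]
    by (simp add: odd_iff_mod_2_eq_one) (metis mod_less_divisor not_mod2_eq_Suc_0_eq_0 zero_less_numeral)
  ultimately show ?case by (metis div_mult_mod_eq)
qed

lemma upper:
  assumes k2: "2 \<le> k" and kn: "k \<le> n" and cnt: "n - k \<le> 2^(k-1)"
  shows "\<exists>T. edge_determining_set (hypercube_vertices n) hypercube_adj T \<and> finite T \<and> card T = k"
proof -
  define col where "col p t = (k \<le> p \<and> 0 < t \<and> odd ((p - k) div 2^(t-1)))" for p t :: nat
  define uu where "uu t = map (\<lambda>p. col p t) [0..<n]" for t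
  define vv where "vv t = (uu t)[t := True]" for t
  define E where "E t = {uu t, vv t}" for t
  define T where "T = E ` {..<k}"
  have luu: "length (uu t) = n" for t unfolding uu_def by simp
  have lvv: "length (vv t) = n" for t unfolding vv_def using luu by simp
  have uun: "p < n \<Longrightarrow> uu t ! p = col p t" for p t unfolding uu_def by simp
  have uut: "t < k \<Longrightarrow> uu t ! t = False" for t using uun[of t t] kn unfolding col_def by simp
  have vvf: "t < k \<Longrightarrow> vv t = (uu t)[t := \<not> uu t ! t]" for t using uut unfolding vv_def by simp
  have vvn: "p < n \<Longrightarrow> vv t ! p = (if p = t then True else uu t ! p)" for p t
    unfolding vv_def using luu by (simp add: nth_list_update)
  have adj: "hypercube_adj (uu t) (vv t)" if "t < k" for t
  proof -
    have "hdist (uu t) (vv t) = 1" using hdist_flip[of "uu t" "uu t" t] vvf[OF that] luu that kn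
      by (simp add: hdist_def)
    thus ?thesis using luu lvv by (simp add: adj_hdist)
  qed
  have Tsub: "T \<subseteq> edges (hypercube_vertices n) hypercube_adj"
    unfolding T_def E_def edges_def hypercube_vertices_def using adj luu lvv by blast
  have injE: "inj_on E {..<k}"
  proof (rule inj_onI)
    fix s t assume st: "s \<in> {..<k}" "t \<in> {..<k}" "E s = E t"
    hence "vv t \<in> {uu s, vv s}" unfolding E_def by auto
    moreover have "vv t ! t = True" using vvn[of t t] st kn by simp
    moreover have "uu s ! t = False" using uun[of t s] st kn unfolding col_def by simp
    ultimately have "vv s ! t = True" by auto
    thus "s = t" using vvn[of t s] uun[of t s] st kn unfolding col_def by (auto split: if_splits)
  qed
  have cardT: "card T = k" unfolding T_def using card_image[OF injE] by simp
  have det: "\<forall>v\<in>hypercube_vertices n. \<phi> v = v"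
    if aut: "graph_aut (hypercube_vertices n) hypercube_adj \<phi>" and fx: "\<forall>e\<in>T. \<phi> ` e = e" for \<phi>
  proof -
    obtain \<pi> a where pa: "\<pi> ` {..<n} = {..<n}" "inj_on \<pi> {..<n}" "length a = n"
      "\<And>x i. length x = n \<Longrightarrow> i < n \<Longrightarrow> \<phi> x ! \<pi> i = (x!i \<noteq> a ! \<pi> i)"
      using aut_structure[OF aut] by blast
    have fixE: "\<phi> ` {uu t, vv t} = {uu t, vv t}" if "t < k" for t
      using fx that unfolding T_def E_def by auto
    have memE: "\<phi> (uu t) \<in> {uu t, vv t}" "\<phi> (vv t) \<in> {uu t, vv t}" if "t < k" for t
      using fixE[OF that] by blast+
    have same: "y \<in> {uu t, vv t} \<Longrightarrow> i < n \<Longrightarrow> i \<noteq> t \<Longrightarrow> y ! i = uu t ! i" for y i t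
      using vvn by auto
    have pit: "\<pi> t = t" if t: "t < k" for t
    proof (rule ccontr)
      assume ne: "\<pi> t \<noteq> t"
      have tn: "t < n" using t kn by simp
      have ptn: "\<pi> t < n" using pa(1) tn by auto
      have "\<phi> (uu t) ! \<pi> t = (uu t ! t \<noteq> a ! \<pi> t)" "\<phi> (vv t) ! \<pi> t = (vv t ! t \<noteq> a ! \<pi> t)"
        using pa(4) luu lvv tn by auto
      moreover have "uu t ! t \<noteq> vv t ! t" using uut[OF t] vvn[OF tn] by simp
      moreover have "\<phi> (uu t) ! \<pi> t = uu t ! \<pi> t" "\<phi> (vv t) ! \<pi> t = uu t ! \<pi> t"
        using same[OF memE(1)[OF t] ptn ne] same[OF memE(2)[OF t] ptn ne] by auto
      ultimately show False by auto
    qed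
    have aJ: "a ! i = False" if i: "i < k" for i
    proof -
      define t where "t = (if i = 0 then 1 else 0::nat)"
      have t: "t < k" "t \<noteq> i" unfolding t_def using k2 by auto
      have "\<phi> (uu t) ! \<pi> i = (uu t ! i \<noteq> a ! \<pi> i)" using pa(4) luu i kn by auto
      moreover have "\<phi> (uu t) ! i = uu t ! i" using same[OF memE(1)[OF t(1)]] i kn t by auto
      ultimately show ?thesis using pit[OF i] by auto
    qed
    have rest: "\<pi> p = p \<and> a ! p = False" if p: "k \<le> p" "p < n" for p
    proof -
      obtain q where q: "q < n" "\<pi> q = p" using pa(1) p by (metis imageE lessThan_iff)
      have qk: "k \<le> q" using pit q p by (metis not_le)
      have eq: "uu t ! p = (uu t ! q \<noteq> a ! p)" if t: "t < k" for t
      proof -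
        have "\<phi> (uu t) ! \<pi> q = (uu t ! q \<noteq> a ! \<pi> q)" using pa(4) luu q by auto
        moreover have "\<phi> (uu t) ! p = uu t ! p" using same[OF memE(1)[OF t]] p t by auto
        ultimately show ?thesis using q by auto
      qed
      have ap: "a ! p = False" using eq[of 0] k2 uun[OF p(2)] uun[OF q(1)] unfolding col_def by auto
      have colq: "col p t = col q t" if "t < k" for t using eq[OF that] ap uun[OF p(2)] uun[OF q(1)] by auto
      have "p - k = q - k"
      proof (rule bits_inj[of _ "k-1"])
        show "p - k < 2^(k-1)" "q - k < 2^(k-1)" using p q cnt by auto
        show "\<forall>s<k - 1. odd ((p - k) div 2 ^ s) = odd ((q - k) div 2 ^ s)"
        proof (intro allI impI)
          fix s assume "s < k - 1"
          hence "Suc s < k" by simp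
          thus "odd ((p - k) div 2 ^ s) = odd ((q - k) div 2 ^ s)" using colq[of "Suc s"] p qk
            unfolding col_def by simp
        qed
      qed
      hence "p = q" using p qk by simp
      thus ?thesis using q ap by simp
    qed
    have all: "\<pi> i = i \<and> a ! i = False" if "i < n" for i
      using pit aJ rest that by (cases "i < k") auto
    show ?thesis
    proof
      fix v assume "v \<in> hypercube_vertices n"
      hence lv: "length v = n" unfolding hypercube_vertices_def by simp
      show "\<phi> v = v"
      proof (rule nth_equalityI)
        show "length (\<phi> v) = length v" using aut_V[OF aut lv] lv by simp
        fix i assume "i < length (\<phi> v)"
        hence i: "i < n" using aut_V[OF aut lv] by simp
        show "\<phi> v ! i = v ! i" using pa(4)[OF lv i] all[OF i] by simp
      qed
    qed
  qed
  have "edge_determining_set (hypercube_vertices n) hypercube_adj T"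
    unfolding edge_determining_set_def using Tsub det by blast
  moreover have "finite T" unfolding T_def by simp
  ultimately show ?thesis using cardT by blast
qed



lemma edge_dir: assumes "e \<in> edges (hypercube_vertices n) hypercube_adj"
  shows "e \<noteq> {} \<and> (\<forall>x\<in>e. length x = n) \<and> (\<exists>j. \<forall>x\<in>e. \<forall>y\<in>e. \<forall>p<n. p \<noteq> j \<longrightarrow> x!p = y!p)"
proof -
  obtain u v where uv: "e = {u,v}" "length u = n" "length v = n" "hypercube_adj u v"
    using assms unfolding edges_def hypercube_vertices_def by auto
  have "card (D u v) = 1" using uv by (simp add: adj_hdist hdist_def)
  then obtain j where j: "D u v = {j}" by (rule card_1_singletonE)
  have "\<forall>p<n. p \<noteq> j \<longrightarrow> u!p = v!p" using j uv unfolding D_def by blast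
  hence "\<forall>x\<in>e. \<forall>y\<in>e. \<forall>p<n. p \<noteq> j \<longrightarrow> x!p = y!p" using uv by auto
  thus ?thesis using uv by auto
qed

lemma lower:
  assumes det: "edge_determining_set (hypercube_vertices n) hypercube_adj T"
    and fin: "finite T" and cT: "card T = m"
  shows "n - m \<le> 2^(m-1)"
proof (rule ccontr)
  assume big: "\<not> n - m \<le> 2^(m-1)"
  let ?V = "hypercube_vertices n"
  have Tsub: "T \<subseteq> edges ?V hypercube_adj" using det unfolding edge_determining_set_def by simp
  define dir where "dir e = (SOME j. \<forall>x\<in>e. \<forall>y\<in>e. \<forall>p<n. p \<noteq> j \<longrightarrow> x!p = y!p)" for e :: "bool list set"
  have dirp: "\<forall>x\<in>e. \<forall>y\<in>e. \<forall>p<n. p \<noteq> dir e \<longrightarrow> x!p = y!p" if "e \<in> T" for e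
  proof -
    have "e \<in> edges ?V hypercube_adj" using Tsub that by blast
    hence "\<exists>j. \<forall>x\<in>e. \<forall>y\<in>e. \<forall>p<n. p \<noteq> j \<longrightarrow> x!p = y!p" using edge_dir[of e n] by blast
    thus ?thesis unfolding dir_def by (rule someI_ex)
  qed
  have ne: "e \<noteq> {}" and lenT: "\<forall>x\<in>e. length x = n" if "e \<in> T" for e
    using edge_dir[of e n] Tsub that by auto
  define J where "J = dir ` T"
  define P where "P = {..<n} - J"
  have cJ: "card J \<le> m" unfolding J_def using card_image_le[OF fin] cT by simp
  have cP: "n - m \<le> card P" unfolding P_def using diff_card_le_card_Diff[of J "{..<n}"] cJ fin J_def by simp
  define val where "val e p = (SOME x. x \<in> e) ! p" for e :: "bool list set" and p
  have valp: "x ! p = val e p" if "e \<in> T" "x \<in> e" "p \<in> P" for e x p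
  proof -
    have "(SOME x. x \<in> e) \<in> e" using ne[OF that(1)] by (simp add: some_in_eq)
    moreover have "p < n" "p \<noteq> dir e" using that(3) that(1) unfolding P_def J_def by auto
    ultimately show ?thesis unfolding val_def using dirp[OF that(1)] that(2) by blast
  qed
  define e0 where "e0 = (SOME e. e \<in> T)"
  define cls where "cls p = {e \<in> T. val e p \<noteq> val e0 p}" for p
  have clsS: "cls ` P \<subseteq> Pow (T - {e0})" unfolding cls_def by auto
  have cD: "card (T - {e0}) = m - 1"
  proof (cases "T = {}")
    case True thus ?thesis using cT by simp
  next
    case False hence "e0 \<in> T" unfolding e0_def by (simp add: some_in_eq)
    thus ?thesis using cT fin by simp
  qed
  have "card (cls ` P) \<le> card (Pow (T - {e0}))" using clsS fin by (intro card_mono) auto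
  hence cc: "card (cls ` P) \<le> 2^(m-1)" using cD fin by (simp add: card_Pow)
  have "\<not> inj_on cls P"
  proof
    assume "inj_on cls P" hence "card (cls ` P) = card P" by (rule card_image)
    thus False using cc cP big by linarith
  qed
  then obtain p q where pq: "p \<in> P" "q \<in> P" "p \<noteq> q" "cls p = cls q" unfolding inj_on_def by blast
  have pn: "p < n" "q < n" using pq unfolding P_def by auto
  define c where "c = (val e0 p \<noteq> val e0 q)"
  have xc: "(x!p \<noteq> x!q) = c" if "e \<in> T" "x \<in> e" for e x
  proof -
    have "e \<in> cls p \<longleftrightarrow> e \<in> cls q" using pq by simp
    hence "(val e p \<noteq> val e0 p) = (val e q \<noteq> val e0 q)" using that unfolding cls_def by simp
    thus ?thesis using valp[OF that pq(1)] valp[OF that pq(2)] unfolding c_def by auto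
  qed
  define \<phi> where "\<phi> x = x[p := (x!q \<noteq> c), q := (x!p \<noteq> c)]" for x :: "bool list"
  have phin: "length x = n \<Longrightarrow> i < n \<Longrightarrow> \<phi> x ! i = (if i = p then (x!q \<noteq> c) else if i = q then (x!p \<noteq> c) else x!i)" for x i
    unfolding \<phi>_def using pn pq(3) by (auto simp: nth_list_update)
  have lphi: "length (\<phi> x) = length x" for x unfolding \<phi>_def by simp
  have invol: "\<phi> (\<phi> x) = x" if "length x = n" for x
  proof (rule nth_equalityI)
    show "length (\<phi> (\<phi> x)) = length x" by (simp add: lphi)
    fix i assume "i < length (\<phi> (\<phi> x))"
    hence i: "i < n" using that by (simp add: lphi)
    have l1: "length (\<phi> x) = n" using that by (simp add: lphi)
    have A: "\<phi> (\<phi> x) ! i = (if i = p then (\<phi> x!q \<noteq> c) else if i = q then (\<phi> x!p \<noteq> c) else \<phi> x!i)"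
      using phin[OF l1 i] .
    have B: "\<phi> x ! q = (x!p \<noteq> c)" "\<phi> x ! p = (x!q \<noteq> c)" using phin[OF that pn(2)] phin[OF that pn(1)] pq(3) by auto
    have C: "i \<noteq> p \<Longrightarrow> i \<noteq> q \<Longrightarrow> \<phi> x ! i = x ! i" using phin[OF that i] by simp
    show "\<phi> (\<phi> x) ! i = x ! i" using A B C by auto
  qed
  define \<tau> where "\<tau> i = (if i = p then q else if i = q then p else i)" for i
  have Dphi: "D (\<phi> x) (\<phi> y) = \<tau> ` D x y" if "length x = n" "length y = n" for x y
  proof -
    have "i \<in> D (\<phi> x) (\<phi> y) \<longleftrightarrow> \<tau> i \<in> D x y" for i
      using that phin pn lphi unfolding D_def \<tau>_def by auto
    moreover have "\<tau> (\<tau> i) = i" for i unfolding \<tau>_def by auto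
    ultimately show ?thesis by (metis (no_types, lifting) image_eqI image_iff subsetI subset_antisym)
  qed
  have injt: "inj \<tau>" unfolding inj_def \<tau>_def by auto
  have aut: "graph_aut ?V hypercube_adj \<phi>"
    unfolding graph_aut_def
  proof
    show "bij_betw \<phi> ?V ?V"
      by (rule bij_betw_byWitness[of _ \<phi>]) (auto simp: hypercube_vertices_def invol lphi)
    show "\<forall>u\<in>?V. \<forall>v\<in>?V. hypercube_adj (\<phi> u) (\<phi> v) = hypercube_adj u v"
    proof (intro ballI)
      fix u v assume "u \<in> ?V" "v \<in> ?V"
      hence l: "length u = n" "length v = n" unfolding hypercube_vertices_def by auto
      have "hdist (\<phi> u) (\<phi> v) = hdist u v" unfolding hdist_def using Dphi[OF l] injt
        by (simp add: card_image inj_on_subset)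
      thus "hypercube_adj (\<phi> u) (\<phi> v) = hypercube_adj u v" using l lphi by (simp add: adj_hdist)
    qed
  qed
  have fixT: "\<forall>e\<in>T. \<phi> ` e = e"
  proof
    fix e assume e: "e \<in> T"
    have "\<phi> x = x" if "x \<in> e" for x
    proof (rule nth_equalityI)
      have lx: "length x = n" using lenT[OF e] that by simp
      show "length (\<phi> x) = length x" by (simp add: lphi)
      fix i assume "i < length (\<phi> x)"
      thus "\<phi> x ! i = x ! i" using phin[OF lx] xc[OF e that] lx lphi by auto
    qed
    thus "\<phi> ` e = e" by simp
  qed
  define x0 where "x0 = (replicate n False)[p := \<not> c]"
  have lx0: "length x0 = n" unfolding x0_def by simp
  have "\<phi> x0 ! q \<noteq> x0 ! q" using phin[OF lx0 pn(2)] pq(3) pn unfolding x0_def by auto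
  moreover have "\<phi> x0 = x0" using det aut fixT lx0 unfolding edge_determining_set_def hypercube_vertices_def by blast
  ultimately show False by simp
qed


theorem theorem11:
  fixes n :: nat
  assumes "n \<ge> 3"
  shows "determining_index (hypercube_vertices n) hypercube_adj =
    (let k = nat \<lceil>log 2 (real n)\<rceil> in
       if n - k > 2 ^ (k - 1) then k + 1 else k)"
proof -
  define K where "K = nat \<lceil>log 2 (real n)\<rceil>"
  define R where "R = (if n - K > 2 ^ (K - 1) then K + 1 else K)"
  note am = arith_main[OF assms, folded K_def, folded R_def]
  have "determining_index (hypercube_vertices n) hypercube_adj = R"
    unfolding determining_index_def
  proof (rule Least_equality)
    show "\<exists>T. edge_determining_set (hypercube_vertices n) hypercube_adj T \<and> finite T \<and> card T = R"
      by (rule upper[OF am(3) am(4) am(1)])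
    fix k assume "\<exists>T. edge_determining_set (hypercube_vertices n) hypercube_adj T \<and> finite T \<and> card T = k"
    then obtain T where "edge_determining_set (hypercube_vertices n) hypercube_adj T" "finite T" "card T = k" by blast
    hence "n - k \<le> 2^(k-1)" by (rule lower)
    thus "R \<le> k" by (rule am(2))
  qed
  thus ?thesis unfolding Let_def K_def R_def .
qed

end
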